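(* Let $r\in\mathbb Z_+$ be even and $\Gamma=\Gamma_{(r,r)}$. If $E\in(-4,4)\setminus\mathcal C_\Gamma$, then $E\in\operatorname{int}B_j^\Gamma$ for some $j$.
   Context: For $r\ge3$ and $\theta\in\mathbb R$, $\Delta_\theta^r\in\mathbb C^{r\times r}$ is the Hermitian matrix with $1$ on the sub- and superdiagonals, $0$ on the diagonal, entry $e^{-i\theta}$ in position $(1,r)$ and $e^{i\theta}$ in position $(r,1)$, all other entries $0$; $\Delta_\theta^2=\begin{bmatrix}0&1+e^{-i\theta}\\1+e^{i\theta}&0\end{bmatrix}$. $\Gamma=\Gamma_{(r,r)}=([0,r)\times[0,r))\cap\mathbb Z^2$, $\Delta^\Gamma_{\theta,\varphi}=\Delta_\theta^r\otimes I_r+I_r\otimes\Delta_\varphi^r$, with eigenvalues $\lambda_1^\Gamma(\theta,\varphi)\le\cdots\le\lambda_{r^2}^\Gamma(\theta,\varphi)$ counted with multiplicity, and bands $B_j^\Gamma=\{\lambda_j^\Gamma(\theta,\varphi):(\theta,\varphi)\in[0,\pi]^2\}$. $\mathcal C_r=\{2\cos(\pi j/r): j\in\mathbb Z,\ 0\le j\le r\}$ and $\mathcal C_\Gamma=\mathcal C_r+\mathcal C_r=\{a+b:a,b\in\mathcal C_r\}$ (the exceptional energies). *)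

theory Defs
  imports "HOL-Analysis.Analysis" "Jordan_Normal_Form.Char_Poly"
begin

text \<open>The r x r matrix Delta^r_theta (0-based indices). Position (1,r) of the paper is (0,r-1).\<close>
definition Delta :: "nat \<Rightarrow> real \<Rightarrow> complex Matrix.mat" where
  "Delta r \<theta> =
    (if r = 2 then
       Matrix.mat 2 2 (\<lambda>(i,j). if i = 0 \<and> j = 1 then 1 + cis (-\<theta>)
                               else if i = 1 \<and> j = 0 then 1 + cis \<theta> else 0)
     else
       Matrix.mat r r (\<lambda>(i,j). if j = i + 1 \<or> i = j + 1 then 1
                               else if i = 0 \<and> j = r - 1 then cis (-\<theta>)
                               else if i = r - 1 \<and> j = 0 then cis \<theta> else 0))"

text \<open>Kronecker product of r x r matrices, index (a,b) of the tensor product is a*r+b.\<close>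
definition kron :: "nat \<Rightarrow> complex Matrix.mat \<Rightarrow> complex Matrix.mat \<Rightarrow> complex Matrix.mat" where
  "kron r A B = Matrix.mat (r*r) (r*r)
     (\<lambda>(p,q). A $$ (p div r, q div r) * B $$ (p mod r, q mod r))"

definition DeltaGamma :: "nat \<Rightarrow> real \<Rightarrow> real \<Rightarrow> complex Matrix.mat" where
  "DeltaGamma r \<theta> \<phi> = kron r (Delta r \<theta>) (1\<^sub>m r) + kron r (1\<^sub>m r) (Delta r \<phi>)"

text \<open>Eigenvalues (roots of the characteristic polynomial, with multiplicity), in increasing order.
  The matrix is Hermitian, so the eigenvalues are real.\<close>
definition eigs :: "nat \<Rightarrow> real \<Rightarrow> real \<Rightarrow> real list" where
  "eigs r \<theta> \<phi> = sorted_list_of_multiset (image_mset Re (proots (char_poly (DeltaGamma r \<theta> \<phi>))))"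

definition lam :: "nat \<Rightarrow> nat \<Rightarrow> real \<Rightarrow> real \<Rightarrow> real" where
  "lam r j \<theta> \<phi> = eigs r \<theta> \<phi> ! (j - 1)"

definition band :: "nat \<Rightarrow> nat \<Rightarrow> real set" where
  "band r j = {lam r j \<theta> \<phi> | \<theta> \<phi>. \<theta> \<in> {0..pi} \<and> \<phi> \<in> {0..pi}}"

definition Cr :: "nat \<Rightarrow> real set" where
  "Cr r = {2 * cos (pi * real j / real r) | j :: nat. j \<le> r}"

definition CGamma :: "nat \<Rightarrow> real set" where
  "CGamma r = {a + b | a b. a \<in> Cr r \<and> b \<in> Cr r}"

end

theory Submission
  imports Defs
begin


definition w :: "nat \<Rightarrow> real \<Rightarrow> nat \<Rightarrow> complex" where
  "w r \<theta> k = cis ((\<theta> + 2*pi*real k)/real r)"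
definition gg :: "nat \<Rightarrow> real \<Rightarrow> nat \<Rightarrow> real" where
  "gg r \<theta> k = 2*cos ((\<theta> + 2*pi*real k)/real r)"
definition Fm :: "nat \<Rightarrow> real \<Rightarrow> complex Matrix.mat" where
  "Fm r \<theta> = Matrix.mat r r (\<lambda>(a,k). w r \<theta> k ^ a)"
definition Gm :: "nat \<Rightarrow> real \<Rightarrow> complex Matrix.mat" where
  "Gm r \<theta> = Matrix.mat r r (\<lambda>(k,a). cnj (w r \<theta> k ^ a) / of_nat r)"

lemma Delta_alt:
  assumes "r \<ge> 2"
  shows "Delta r \<theta> = Matrix.mat r r (\<lambda>(a,b). (if b = a+1 then 1 else 0) + (if a = b+1 then 1 else 0)
     + (if a = 0 \<and> b = r-1 then cis (-\<theta>) else 0) + (if a = r-1 \<and> b = 0 then cis \<theta> else 0))"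
proof (cases "r = 2")
  case True
  show ?thesis
    unfolding Delta_def True
    by (rule eq_matI) (auto simp: less_2_cases_iff)
next
  case False
  with assms have "r \<ge> 3" by auto
  then show ?thesis unfolding Delta_def using False
    by (intro eq_matI) auto
qed

lemma cis_2pik: "cis (x + 2*pi*real k) = cis x"
proof -
  have "cos (2*pi*real k) = 1" "sin (2*pi*real k) = 0"
    using cos_2npi[of k] sin_2npi[of k] by (simp_all add: mult.commute mult.left_commute)
  then show ?thesis by (simp add: complex_eq_iff cis.ctr cos_add sin_add)
qed

lemma w_pow_r: "r > 0 \<Longrightarrow> w r \<theta> k ^ r = cis \<theta>"
proof -
  assume r: "r > 0"
  have "w r \<theta> k ^ r = cis (real r * ((\<theta> + 2*pi*real k)/real r))"
    unfolding w_def by (rule Complex.DeMoivre)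
  also have "real r * ((\<theta> + 2*pi*real k)/real r) = \<theta> + 2*pi*real k" using r by simp
  finally show ?thesis by (simp add: cis_2pik)
qed

lemma w_nz: "w r \<theta> k \<noteq> 0" unfolding w_def by simp

lemma gg_w: "complex_of_real (gg r \<theta> k) = w r \<theta> k + inverse (w r \<theta> k)"
  unfolding gg_def w_def by (simp add: complex_eq_iff cis.ctr)

lemma sum_delta_nat: "(\<Sum>b\<in>{0..<(r::nat)}. (if b = c then f b else 0)) = (if c < r then f c else (0::complex))"
  by (subst sum.delta) auto

lemma eig:
  assumes r: "r \<ge> 2" and a: "a < r" and k: "k < r"
  shows "(Delta r \<theta> * Fm r \<theta>) $$ (a,k) = complex_of_real (gg r \<theta> k) * (Fm r \<theta> $$ (a,k))"
proof -
  define x where "x = w r \<theta> k"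
  have x0: "x \<noteq> 0" unfolding x_def by (rule w_nz)
  have xr: "x ^ r = cis \<theta>" unfolding x_def using r by (intro w_pow_r) auto
  have "(Delta r \<theta> * Fm r \<theta>) $$ (a,k) = (\<Sum>b\<in>{0..<r}.
     ((if b = a+1 then 1 else 0) + (if a = b+1 then 1 else 0)
     + (if a = 0 \<and> b = r-1 then cis (-\<theta>) else 0) + (if a = r-1 \<and> b = 0 then cis \<theta> else 0)) * x ^ b)"
    using a k r unfolding Delta_alt[OF r] by (simp add: Fm_def scalar_prod_def x_def)
  also have "\<dots> = (\<Sum>b\<in>{0..<r}. (if b = a+1 then x^b else 0)) + (\<Sum>b\<in>{0..<r}. (if b = a - 1 then (if 0 < a then x^b else 0) else 0))
     + (\<Sum>b\<in>{0..<r}. (if b = r-1 then (if a = 0 then cis (-\<theta>) * x^b else 0) else 0))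
     + (\<Sum>b\<in>{0..<r}. (if b = 0 then (if a = r-1 then cis \<theta> * x^b else 0) else 0))"
    unfolding sum.distrib[symmetric] by (intro sum.cong refl) (auto simp: distrib_right)
  also have "\<dots> = (if a+1 < r then x^(a+1) else 0) + (if 0 < a then x^(a-1) else 0)
     + (if a = 0 then cis (-\<theta>) * x^(r-1) else 0) + (if a = r-1 then cis \<theta> else 0)"
    using a r by (simp only: sum_delta_nat) auto
  also have "\<dots> = (x + inverse x) * x ^ a"
  proof -
    have xr1: "x ^ (r-1) = cis \<theta> / x" using xr x0 r
    proof -
      have "x ^ r = x * x ^ (r-1)" using r by (cases r) auto
      then show ?thesis using xr x0 by (simp add: field_simps)
    qed
    consider "a = 0" | "a = r - 1" | "0 < a" "a < r - 1" using a r by linarith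
    then show ?thesis
    proof cases
      case 1
      have c1: "cis (-\<theta>) * cis \<theta> = 1" by (simp add: cis_mult)
      have "x * (cis (- \<theta>) * x ^ (r - 1)) = 1"
      proof -
        have "x * x ^ (r - 1) = cis \<theta>" using xr1 x0 by simp
        then have "x * (cis (- \<theta>) * x ^ (r - 1)) = cis (- \<theta>) * cis \<theta>"
          by (simp add: mult.left_commute)
        then show ?thesis using c1 by simp
      qed
      then show ?thesis using 1 r x0 by (simp add: field_simps)
    next
      case 2
      have aS: "a = Suc (a-1)" using 2 r by arith
      have h1: "x * x ^ a = cis \<theta>"
      proof -
        have "Suc a = r" using 2 r by arith
        then show ?thesis using xr by (metis power_Suc)
      qed
      have h2: "inverse x * x ^ a = x ^ (a-1)"
      proof -
        have "x ^ a = x * x ^ (a-1)" using aS by (metis power_Suc)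
        then show ?thesis using x0 by simp
      qed
      have "\<not> a + 1 < r" "0 < a" "a \<noteq> 0" using 2 r by arith+
      then show ?thesis
        by (simp only: if_not_P if_P[OF 2] if_False if_True add_0_left add_0_right distrib_right h1 h2 add.commute)
    next
      case 3
      have "x ^ a = x * x ^ (a-1)" using 3 by (cases a) auto
      then show ?thesis using 3 x0 by (auto simp: field_simps)
    qed
  qed
  also have "\<dots> = complex_of_real (gg r \<theta> k) * (Fm r \<theta> $$ (a,k))"
    using a k by (simp add: gg_w Fm_def x_def)
  finally show ?thesis .
qed

lemma sum_divmod:
  fixes F :: "nat \<Rightarrow> nat \<Rightarrow> 'b::comm_monoid_add"
  shows "(\<Sum>s\<in>{0..<r*r}. F (s div r) (s mod r)) = (\<Sum>a\<in>{0..<r}. \<Sum>b\<in>{0..<r}. F a b)"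
proof -
  let ?g = "\<lambda>(a,b). a*r+b"
  have inj: "inj_on ?g ({0..<r}\<times>{0..<r})"
  proof (rule inj_onI, clarsimp)
    fix a b a' b' assume a: "b < r" "b' < r" "a*r+b = a'*r+b'"
    have r0: "r > 0" using a by simp
    have "a = (a*r+b) div r" using a(1) r0 by simp
    also have "\<dots> = (a'*r+b') div r" by (simp only: a(3))
    also have "\<dots> = a'" using a(2) r0 by simp
    finally have "a = a'" .
    then show "a = a' \<and> b = b'" using a(3) by simp
  qed
  have img: "?g ` ({0..<r}\<times>{0..<r}) = {0..<r*r}"
  proof
    show "?g ` ({0..<r}\<times>{0..<r}) \<subseteq> {0..<r*r}"
    proof clarsimp
      fix a b assume "a < r" "b < r"
      then have "a*r + b < a*r + r" by simp
      also have "\<dots> = (a+1)*r" by simp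
      also have "\<dots> \<le> r*r" using \<open>a<r\<close> by (intro mult_le_mono1) simp
      finally show "a*r+b < r*r" .
    qed
  next
    show "{0..<r*r} \<subseteq> ?g ` ({0..<r}\<times>{0..<r})"
    proof
      fix s assume s: "s \<in> {0..<r*r}"
      then have r0: "r > 0" by (cases r) auto
      have "s = ?g (s div r, s mod r)" by simp
      moreover have "s div r < r" using s r0 by (simp add: div_less_iff_less_mult)
      moreover have "s mod r < r" using r0 by simp
      ultimately show "s \<in> ?g ` ({0..<r}\<times>{0..<r})"
        by (intro image_eqI[of _ _ "(s div r, s mod r)"]) auto
    qed
  qed
  have "(\<Sum>s\<in>{0..<r*r}. F (s div r) (s mod r)) = (\<Sum>x\<in>{0..<r}\<times>{0..<r}. F (?g x div r) (?g x mod r))"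
    unfolding img[symmetric] by (subst sum.reindex[OF inj]) (simp add: comp_def)
  also have "\<dots> = (\<Sum>x\<in>{0..<r}\<times>{0..<r}. F (fst x) (snd x))"
    by (intro sum.cong refl) auto
  also have "\<dots> = (\<Sum>a\<in>{0..<r}. \<Sum>b\<in>{0..<r}. F a b)"
    by (simp add: sum.cartesian_product split_beta)
  finally show ?thesis .
qed

lemma kron_carrier[simp]: "kron r A B \<in> carrier_mat (r*r) (r*r)"
  unfolding kron_def by simp

lemma dim_kron[simp]: "dim_row (kron r A B) = r*r" "dim_col (kron r A B) = r*r"
  unfolding kron_def by simp_all

lemma kron_index: "p < r*r \<Longrightarrow> q < r*r \<Longrightarrow> kron r A B $$ (p,q) = A $$ (p div r, q div r) * B $$ (p mod r, q mod r)"
  unfolding kron_def by simp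

lemma divmod_lt: "p < r*r \<Longrightarrow> p div r < r \<and> p mod r < r" for p r :: nat
proof -
  assume p: "p < r*r"
  then have r: "r > 0" by (cases r) auto
  then show ?thesis using p by (simp add: div_less_iff_less_mult)
qed

lemma kron_mult:
  assumes "A \<in> carrier_mat r r" "B \<in> carrier_mat r r" "C \<in> carrier_mat r r" "D \<in> carrier_mat r r"
  shows "kron r A B * kron r C D = kron r (A*C) (B*D)"
proof (rule eq_matI)
  show "dim_row (kron r A B * kron r C D) = dim_row (kron r (A*C) (B*D))" by simp
  show "dim_col (kron r A B * kron r C D) = dim_col (kron r (A*C) (B*D))" by simp
  fix p q assume p: "p < dim_row (kron r (A*C) (B*D))" and q: "q < dim_col (kron r (A*C) (B*D))"
  then have p': "p < r*r" and q': "q < r*r" by auto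
  have "(kron r A B * kron r C D) $$ (p,q) = (\<Sum>s\<in>{0..<r*r}. kron r A B $$ (p,s) * kron r C D $$ (s,q))"
    using p' q' by (simp add: scalar_prod_def)
  also have "\<dots> = (\<Sum>s\<in>{0..<r*r}. (\<lambda>a b. (A $$ (p div r, a) * C $$ (a, q div r)) * (B $$ (p mod r, b) * D $$ (b, q mod r))) (s div r) (s mod r))"
    using p' q' by (intro sum.cong refl) (simp add: kron_index algebra_simps)
  also have "\<dots> = (\<Sum>a\<in>{0..<r}. \<Sum>b\<in>{0..<r}. (A $$ (p div r, a) * C $$ (a, q div r)) * (B $$ (p mod r, b) * D $$ (b, q mod r)))"
    by (rule sum_divmod)
  also have "\<dots> = (\<Sum>a\<in>{0..<r}. A $$ (p div r, a) * C $$ (a, q div r)) * (\<Sum>b\<in>{0..<r}. B $$ (p mod r, b) * D $$ (b, q mod r))"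
    by (simp add: sum_product)
  also have "\<dots> = kron r (A*C) (B*D) $$ (p,q)"
    using p' q' assms divmod_lt[OF p'] divmod_lt[OF q'] by (simp add: kron_index scalar_prod_def)
  finally show "(kron r A B * kron r C D) $$ (p,q) = kron r (A*C) (B*D) $$ (p,q)" .
qed

lemma kron_one: "kron r (1\<^sub>m r) (1\<^sub>m r) = 1\<^sub>m (r*r)"
proof (rule eq_matI)
  fix p q assume "p < dim_row (1\<^sub>m (r*r) :: complex Matrix.mat)" "q < dim_col (1\<^sub>m (r*r) :: complex Matrix.mat)"
  then have p: "p < r*r" and q: "q < r*r" by auto
  have "(p div r = q div r \<and> p mod r = q mod r) = (p = q)"
    by (metis div_mult_mod_eq)
  then show "kron r (1\<^sub>m r) (1\<^sub>m r) $$ (p,q) = 1\<^sub>m (r*r) $$ (p,q)"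
    using p q divmod_lt[OF p] divmod_lt[OF q] by (auto simp: kron_index)
qed auto

lemma root_sum:
  assumes r: "r > 0" and k: "k < r" and l: "l < r"
  shows "(\<Sum>a\<in>{0..<r}. (cnj (w r \<theta> k) * w r \<theta> l) ^ a) = (if k = l then of_nat r else 0)"
proof -
  define z where "z = cnj (w r \<theta> k) * w r \<theta> l"
  have z: "z = cis (2*pi*(real l - real k)/real r)"
    unfolding z_def w_def cis_cnj cis_mult by (simp add: diff_divide_distrib[symmetric] algebra_simps)
  show ?thesis
  proof (cases "k = l")
    case True
    then have "z = 1" using z by simp
    then show ?thesis using True z_def by simp
  next
    case False
    have zr: "z ^ r = 1"
    proof -
      have "z ^ r = cnj (w r \<theta> k ^ r) * w r \<theta> l ^ r" unfolding z_def by (simp add: power_mult_distrib)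
      also have "\<dots> = cnj (cis \<theta>) * cis \<theta>" using r by (simp add: w_pow_r)
      also have "\<dots> = 1" by (simp add: cis_cnj cis_mult)
      finally show ?thesis .
    qed
    have z1: "z \<noteq> 1"
    proof
      assume "z = 1"
      then have "cos (2*pi*(real l - real k)/real r) = 1" using z by (simp add: complex_eq_iff cis.ctr)
      then obtain n :: int where n: "2*pi*(real l - real k)/real r = n * 2 * pi"
        by (auto simp: cos_one_2pi_int)
      then have "2*pi*(real l - real k) = 2*pi*(n * real r)" using r by (simp add: field_simps)
      then have "real l - real k = n * real r" using pi_gt_zero by simp
      then have e: "int l - int k = n * int r"
        by (metis of_int_eq_iff of_int_diff of_int_mult of_int_of_nat_eq)
      have "n = 0"
      proof (rule ccontr)
        assume "n \<noteq> 0"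
        then have "\<bar>n\<bar> \<ge> 1" by simp
        then have "\<bar>n * int r\<bar> \<ge> int r" by (simp add: abs_mult mult_le_cancel_right1)
        moreover have "\<bar>int l - int k\<bar> < int r" using k l by auto
        ultimately show False using e by simp
      qed
      then show False using e False by simp
    qed
    have "(\<Sum>a\<in>{0..<r}. z ^ a) = (z ^ r - 1) / (z - 1)"
      using geometric_sum[OF z1] by (simp add: atLeast0LessThan)
    then show ?thesis using zr False z_def by simp
  qed
qed

lemma Fm_carrier[simp]: "Fm r \<theta> \<in> carrier_mat r r" unfolding Fm_def by simp
lemma Gm_carrier[simp]: "Gm r \<theta> \<in> carrier_mat r r" unfolding Gm_def by simp

lemma GF: assumes r: "r > 0" shows "Gm r \<theta> * Fm r \<theta> = 1\<^sub>m r"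
proof (rule eq_matI)
  fix k l assume "k < dim_row (1\<^sub>m r :: complex Matrix.mat)" "l < dim_col (1\<^sub>m r :: complex Matrix.mat)"
  then have k: "k < r" and l: "l < r" by auto
  have "(Gm r \<theta> * Fm r \<theta>) $$ (k,l) = (\<Sum>a\<in>{0..<r}. cnj (w r \<theta> k ^ a) / of_nat r * w r \<theta> l ^ a)"
    using k l by (simp add: Gm_def Fm_def scalar_prod_def)
  also have "\<dots> = (\<Sum>a\<in>{0..<r}. (cnj (w r \<theta> k) * w r \<theta> l) ^ a) / of_nat r"
    by (simp add: sum_divide_distrib power_mult_distrib)
  also have "\<dots> = 1\<^sub>m r $$ (k,l)" using root_sum[OF r k l] k l r by simp
  finally show "(Gm r \<theta> * Fm r \<theta>) $$ (k,l) = 1\<^sub>m r $$ (k,l)" .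
qed (auto simp: Gm_def Fm_def)

definition mu :: "nat \<Rightarrow> real \<Rightarrow> real \<Rightarrow> nat \<Rightarrow> real" where
  "mu r \<theta> \<phi> p = gg r \<theta> (p div r) + gg r \<phi> (p mod r)"
definition Dm :: "nat \<Rightarrow> real \<Rightarrow> real \<Rightarrow> complex Matrix.mat" where
  "Dm r \<theta> \<phi> = Matrix.mat (r*r) (r*r) (\<lambda>(p,q). if p = q then complex_of_real (mu r \<theta> \<phi> p) else 0)"

lemma Delta_carrier[simp]: "Delta r \<theta> \<in> carrier_mat r r"
  unfolding Delta_def by auto

lemma Dm_carrier[simp]: "Dm r \<theta> \<phi> \<in> carrier_mat (r*r) (r*r)" unfolding Dm_def by simp

lemma DG_carrier[simp]: "DeltaGamma r \<theta> \<phi> \<in> carrier_mat (r*r) (r*r)"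
  unfolding DeltaGamma_def by simp

lemma DG_P:
  assumes r: "r \<ge> 2"
  shows "DeltaGamma r \<theta> \<phi> * kron r (Fm r \<theta>) (Fm r \<phi>) = kron r (Fm r \<theta>) (Fm r \<phi>) * Dm r \<theta> \<phi>"
proof -
  have "DeltaGamma r \<theta> \<phi> * kron r (Fm r \<theta>) (Fm r \<phi>)
     = kron r (Delta r \<theta>) (1\<^sub>m r) * kron r (Fm r \<theta>) (Fm r \<phi>) + kron r (1\<^sub>m r) (Delta r \<phi>) * kron r (Fm r \<theta>) (Fm r \<phi>)"
    unfolding DeltaGamma_def by (rule add_mult_distrib_mat[of _ "r*r" "r*r" _ _ "r*r"]) auto
  also have "\<dots> = kron r (Delta r \<theta> * Fm r \<theta>) (Fm r \<phi>) + kron r (Fm r \<theta>) (Delta r \<phi> * Fm r \<phi>)"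
    by (simp add: kron_mult left_mult_one_mat[OF Fm_carrier])
  also have "\<dots> = kron r (Fm r \<theta>) (Fm r \<phi>) * Dm r \<theta> \<phi>"
  proof (rule eq_matI)
    fix p q assume "p < dim_row (kron r (Fm r \<theta>) (Fm r \<phi>) * Dm r \<theta> \<phi>)" "q < dim_col (kron r (Fm r \<theta>) (Fm r \<phi>) * Dm r \<theta> \<phi>)"
    then have p: "p < r*r" and q: "q < r*r" by (auto simp: Dm_def)
    note pp = divmod_lt[OF p] and qq = divmod_lt[OF q]
    have "(kron r (Fm r \<theta>) (Fm r \<phi>) * Dm r \<theta> \<phi>) $$ (p,q)
       = (\<Sum>s\<in>{0..<r*r}. kron r (Fm r \<theta>) (Fm r \<phi>) $$ (p,s) * (if s = q then complex_of_real (mu r \<theta> \<phi> s) else 0))"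
      using p q by (simp add: scalar_prod_def Dm_def)
    also have "\<dots> = kron r (Fm r \<theta>) (Fm r \<phi>) $$ (p,q) * complex_of_real (mu r \<theta> \<phi> q)"
      using q by (simp add: if_distrib sum.delta cong: if_cong)
    finally have rhs: "(kron r (Fm r \<theta>) (Fm r \<phi>) * Dm r \<theta> \<phi>) $$ (p,q) = kron r (Fm r \<theta>) (Fm r \<phi>) $$ (p,q) * complex_of_real (mu r \<theta> \<phi> q)" .
    show "(kron r (Delta r \<theta> * Fm r \<theta>) (Fm r \<phi>) + kron r (Fm r \<theta>) (Delta r \<phi> * Fm r \<phi>)) $$ (p,q)
       = (kron r (Fm r \<theta>) (Fm r \<phi>) * Dm r \<theta> \<phi>) $$ (p,q)"
      unfolding rhs using p q pp qq r
      by (simp add: kron_index eig mu_def algebra_simps)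
  qed (auto simp: Dm_def)
  finally show ?thesis .
qed

lemma DG_similar:
  assumes r: "r \<ge> 2"
  shows "similar_mat (DeltaGamma r \<theta> \<phi>) (Dm r \<theta> \<phi>)"
proof -
  let ?P = "kron r (Fm r \<theta>) (Fm r \<phi>)" and ?Q = "kron r (Gm r \<theta>) (Gm r \<phi>)"
  have QP: "?Q * ?P = 1\<^sub>m (r*r)" using r by (simp add: kron_mult GF kron_one)
  have PQ: "?P * ?Q = 1\<^sub>m (r*r)" by (rule mat_mult_left_right_inverse[OF _ _ QP]) auto
  have "DeltaGamma r \<theta> \<phi> = DeltaGamma r \<theta> \<phi> * (?P * ?Q)" unfolding PQ by (simp add: right_mult_one_mat[OF DG_carrier])
  also have "\<dots> = (DeltaGamma r \<theta> \<phi> * ?P) * ?Q"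
    by (rule assoc_mult_mat[symmetric, of _ "r*r" "r*r" _ "r*r" _ "r*r"]) auto
  also have "\<dots> = ?P * Dm r \<theta> \<phi> * ?Q" unfolding DG_P[OF r] ..
  finally have "DeltaGamma r \<theta> \<phi> = ?P * Dm r \<theta> \<phi> * ?Q" .
  then show ?thesis by (intro similar_matI[of _ _ ?P ?Q "r*r"]) (auto simp: PQ QP)
qed

lemma proots_lin: "proots (\<Prod>a\<leftarrow>xs. [:- a, 1:]) = mset (xs :: complex list)"
proof (induction xs)
  case Nil then show ?case by simp
next
  case (Cons a xs)
  have "proots (\<Prod>a\<leftarrow>a#xs. [:- a, 1:]) = proots ([:- a, 1:] * (\<Prod>a\<leftarrow>xs. [:- a, 1:]))" by simp
  also have "\<dots> = proots [:- a, 1:] + proots (\<Prod>a\<leftarrow>xs. [:- a, 1:])"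
    by (rule proots_mult) (auto simp: prod_list_zero_iff)
  finally show ?case using Cons by simp
qed

definition vals :: "nat \<Rightarrow> real \<Rightarrow> real \<Rightarrow> real list" where
  "vals r \<theta> \<phi> = map (mu r \<theta> \<phi>) [0..<r*r]"

lemma eigs_vals:
  assumes r: "r \<ge> 2"
  shows "eigs r \<theta> \<phi> = sort (vals r \<theta> \<phi>)"
proof -
  have ut: "upper_triangular (Dm r \<theta> \<phi>)" unfolding upper_triangular_def Dm_def by auto
  have "char_poly (DeltaGamma r \<theta> \<phi>) = char_poly (Dm r \<theta> \<phi>)"
    by (rule char_poly_similar[OF DG_similar[OF r]])
  also have "\<dots> = (\<Prod>a\<leftarrow>diag_mat (Dm r \<theta> \<phi>). [:- a, 1:])"
    by (rule char_poly_upper_triangular[OF Dm_carrier ut])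
  finally have cp: "proots (char_poly (DeltaGamma r \<theta> \<phi>)) = mset (diag_mat (Dm r \<theta> \<phi>))"
    by (simp add: proots_lin)
  have dm: "diag_mat (Dm r \<theta> \<phi>) = map (\<lambda>p. complex_of_real (mu r \<theta> \<phi> p)) [0..<r*r]"
    unfolding diag_mat_def Dm_def by (intro nth_equalityI) auto
  have "eigs r \<theta> \<phi> = sorted_list_of_multiset (mset (vals r \<theta> \<phi>))"
    unfolding eigs_def cp dm vals_def by (simp add: multiset.map_comp comp_def)
  then show ?thesis by (simp add: sorted_list_of_multiset_mset)
qed



lemma cos_lip: "\<bar>cos x - cos y\<bar> \<le> \<bar>x - y\<bar>" for x y :: real
proof -
  have "\<bar>cos x - cos y\<bar> = 2 * \<bar>sin ((x + y) / 2)\<bar> * \<bar>sin ((y - x) / 2)\<bar>"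
    by (simp add: cos_diff_cos abs_mult)
  also have "\<dots> \<le> 2 * 1 * \<bar>(y - x) / 2\<bar>"
    by (intro mult_mono abs_sin_x_le_abs_x) auto
  also have "\<dots> = \<bar>x - y\<bar>" by simp
  finally show ?thesis .
qed

lemma sorted_count:
  fixes s :: "real list"
  assumes "sorted s" "1 \<le> j" "j \<le> length s"
  shows "s ! (j-1) < E \<longleftrightarrow> j \<le> length (filter (\<lambda>x. x < E) s)"
  using assms
proof (induction s arbitrary: j)
  case Nil then show ?case by simp
next
  case (Cons x s)
  have allge: "\<forall>y\<in>set s. x \<le> y" using Cons.prems(1) by simp
  show ?case
  proof (cases "x < E")
    case True
    show ?thesis
    proof (cases "j = 1")
      case True then show ?thesis using \<open>x < E\<close> by simp
    next
      case False
      then have "(x#s) ! (j-1) = s ! (j-1-1)" "1 \<le> j - 1" "j - 1 \<le> length s"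
        using Cons.prems by auto
      then show ?thesis using Cons.IH[of "j-1"] Cons.prems(1) \<open>x < E\<close> False by auto
    qed
  next
    case False
    then have f: "filter (\<lambda>x. x < E) (x#s) = []" using allge by (auto simp: filter_empty_conv)
    have "(x#s) ! (j-1) \<in> set (x#s)" using Cons.prems by (intro nth_mem) auto
    then have "(x#s) ! (j-1) \<ge> x" using allge by auto
    then show ?thesis using f False Cons.prems by auto
  qed
qed

lemma count_sort: "length (filter P (sort xs)) = length (filter P (xs::real list))"
  by (metis mset_filter mset_sort size_mset)

lemma count_mono:
  assumes "length xs = length ys" "\<forall>i<length ys. P (ys!i) \<longrightarrow> Q (xs!i)"
  shows "length (filter P ys) \<le> length (filter Q xs)"
  unfolding length_filter_conv_card using assms by (intro card_mono) auto

lemma sort_lip: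
  fixes xs ys :: "real list"
  assumes len: "length xs = length ys" and d: "\<forall>i<length ys. \<bar>xs!i - ys!i\<bar> \<le> \<delta>"
    and j: "1 \<le> j" "j \<le> length ys"
  shows "sort xs ! (j-1) \<le> sort ys ! (j-1) + \<delta>"
proof (rule ccontr)
  assume "\<not> ?thesis"
  then have gt: "sort xs ! (j-1) > sort ys ! (j-1) + \<delta>" by simp
  define e where "e = (sort xs ! (j-1) - sort ys ! (j-1) - \<delta>) / 2"
  have e: "e > 0" using gt unfolding e_def by simp
  let ?c = "sort ys ! (j-1) + e"
  have "sort ys ! (j-1) < ?c" using e by simp
  then have "j \<le> length (filter (\<lambda>x. x < ?c) (sort ys))"
    using sorted_count[of "sort ys" j ?c] j by simp
  also have "\<dots> = length (filter (\<lambda>x. x < ?c) ys)" by (rule count_sort)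
  also have "\<dots> \<le> length (filter (\<lambda>x. x < ?c + \<delta>) xs)"
  proof (rule count_mono[OF len], intro allI impI)
    fix i assume i: "i < length ys" "ys ! i < ?c"
    then have "\<bar>xs!i - ys!i\<bar> \<le> \<delta>" using d by simp
    then show "xs ! i < ?c + \<delta>" using i(2) by (simp add: abs_le_iff)
  qed
  also have "\<dots> = length (filter (\<lambda>x. x < ?c + \<delta>) (sort xs))" by (rule count_sort[symmetric])
  finally have "sort xs ! (j-1) < ?c + \<delta>"
    using sorted_count[of "sort xs" j "?c + \<delta>"] j len by simp
  moreover have "?c + \<delta> = sort xs ! (j-1) - e" unfolding e_def by (simp add: field_simps)
  ultimately show False using e by linarith
qed



lemma inv_even:
  assumes "finite S" "\<forall>x\<in>S. \<sigma> x \<in> S \<and> \<sigma> (\<sigma> x) = x \<and> \<sigma> x \<noteq> x"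
  shows "even (card S)"
  using assms
proof (induction "card S" arbitrary: S rule: less_induct)
  case less
  show ?case
  proof (cases "S = {}")
    case True then show ?thesis by simp
  next
    case False
    then obtain x where x: "x \<in> S" by blast
    let ?S' = "S - {x, \<sigma> x}"
    have sx: "\<sigma> x \<in> S" "\<sigma> x \<noteq> x" using less.prems x by auto
    have c: "card S = card ?S' + 2"
    proof -
      have "card ?S' = card S - card {x, \<sigma> x}" using less.prems(1) x sx by (intro card_Diff_subset) auto
      moreover have "card {x, \<sigma> x} = 2" using sx by simp
      moreover have "card {x, \<sigma> x} \<le> card S" using less.prems(1) x sx by (intro card_mono) auto
      ultimately show ?thesis by simp
    qed
    have "even (card ?S')"
    proof (rule less.hyps)
      show "card ?S' < card S" using c by simp
      show "finite ?S'" using less.prems by simp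
      show "\<forall>y\<in>?S'. \<sigma> y \<in> ?S' \<and> \<sigma> (\<sigma> y) = y \<and> \<sigma> y \<noteq> y"
      proof
        fix y assume y: "y \<in> ?S'"
        then have yS: "y \<in> S" "y \<noteq> x" "y \<noteq> \<sigma> x" by auto
        have p: "\<sigma> y \<in> S" "\<sigma> (\<sigma> y) = y" "\<sigma> y \<noteq> y" using less.prems(2) yS(1) by auto
        have px: "\<sigma> (\<sigma> x) = x" using less.prems(2) x by auto
        have "\<sigma> y \<noteq> x" using p(2) yS(3) by auto
        moreover have "\<sigma> y \<noteq> \<sigma> x" using p(2) px yS(2) by metis
        ultimately show "\<sigma> y \<in> ?S' \<and> \<sigma> (\<sigma> y) = y \<and> \<sigma> y \<noteq> y" using p by auto
      qed
    qed
    then show ?thesis using c by simp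
  qed
qed

lemma inv_parity:
  assumes fin: "finite S" and inv: "\<forall>x\<in>S. \<sigma> x \<in> S \<and> \<sigma> (\<sigma> x) = x"
  shows "even (card S) = even (card {x\<in>S. \<sigma> x = x})"
proof -
  let ?F = "{x\<in>S. \<sigma> x = x}"
  have "card S = card ?F + card (S - ?F)"
  proof -
    have "S = ?F \<union> (S - ?F)" by auto
    then have "card S = card (?F \<union> (S - ?F))" by simp
    also have "\<dots> = card ?F + card (S - ?F)" using fin by (intro card_Un_disjoint) auto
    finally show ?thesis .
  qed
  moreover have "even (card (S - ?F))"
    using fin inv by (intro inv_even[of _ \<sigma>]) auto
  ultimately show ?thesis by simp
qed

lemma card_divmod:
  fixes r :: nat
  assumes r: "r > 0"
  shows "card {p. p < r*r \<and> P (p div r) (p mod r)} = card {(a,b). a < r \<and> b < r \<and> P a b}"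
proof -
  let ?f = "\<lambda>p. (p div r, p mod r)"
  have inj: "inj_on ?f {p. p < r*r \<and> P (p div r) (p mod r)}"
  proof (rule inj_onI)
    fix p q assume "(p div r, p mod r) = (q div r, q mod r)"
    then have "p div r = q div r" "p mod r = q mod r" by auto
    then show "p = q" by (metis div_mult_mod_eq)
  qed
  have "?f ` {p. p < r*r \<and> P (p div r) (p mod r)} = {(a,b). a < r \<and> b < r \<and> P a b}"
  proof
    show "?f ` {p. p < r*r \<and> P (p div r) (p mod r)} \<subseteq> {(a,b). a < r \<and> b < r \<and> P a b}"
      using divmod_lt by auto
  next
    show "{(a,b). a < r \<and> b < r \<and> P a b} \<subseteq> ?f ` {p. p < r*r \<and> P (p div r) (p mod r)}"
    proof clarsimp
      fix a b assume ab: "a < r" "b < r" "P a b"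
      have "a*r+b < r*r"
      proof -
        have "a*r + b < a*r + r" using ab by simp
        also have "\<dots> = (a+1)*r" by simp
        also have "\<dots> \<le> r*r" using ab by (intro mult_le_mono1) simp
        finally show ?thesis .
      qed
      moreover have "(a*r+b) div r = a" "(a*r+b) mod r = b" using ab by auto
      ultimately show "(a, b) \<in> ?f ` {p. p < r*r \<and> P (p div r) (p mod r)}"
        using ab by (intro image_eqI[of _ _ "a*r+b"]) auto
    qed
  qed
  then show ?thesis using card_image[OF inj] by simp
qed

lemma count_vals:
  assumes r: "r > 0"
  shows "length (filter (\<lambda>x. x < E) (vals r \<theta> \<phi>)) = card {(a,b). a < r \<and> b < r \<and> gg r \<theta> a + gg r \<phi> b < E}"
proof -
  have "length (filter (\<lambda>x. x < E) (vals r \<theta> \<phi>)) = card {p. p < r*r \<and> gg r \<theta> (p div r) + gg r \<phi> (p mod r) < E}"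
    unfolding length_filter_conv_card vals_def by (intro arg_cong[where f=card] Collect_cong) (auto simp: mu_def)
  also have "\<dots> = card {(a,b). a < r \<and> b < r \<and> gg r \<theta> a + gg r \<phi> b < E}"
    by (rule card_divmod[OF r])
  finally show ?thesis .
qed



lemma gg_lip:
  assumes r: "r > 0"
  shows "\<bar>gg r t a - gg r t' a\<bar> \<le> 2 * \<bar>t - t'\<bar>"
proof -
  define X where "X = (t + 2*pi*real a)/real r"
  define Y where "Y = (t' + 2*pi*real a)/real r"
  have h: "gg r t a - gg r t' a = 2 * (cos X - cos Y)" unfolding gg_def X_def Y_def by simp
  have "\<bar>gg r t a - gg r t' a\<bar> = 2 * \<bar>cos X - cos Y\<bar>" unfolding h abs_mult by simp
  also have "\<dots> \<le> 2 * \<bar>X - Y\<bar>" using cos_lip[of X Y] by simp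
  also have "X - Y = (t - t') / real r" unfolding X_def Y_def by (simp add: diff_divide_distrib[symmetric])
  also have "\<bar>(t - t') / real r\<bar> = \<bar>t - t'\<bar> / real r" by simp
  also have "\<bar>t - t'\<bar> / real r \<le> \<bar>t - t'\<bar>"
    using r by (simp add: divide_le_eq mult_le_cancel_left1)
  finally show ?thesis by simp
qed

lemma vals_lip:
  assumes r: "r > 0" and i: "i < r*r"
  shows "\<bar>vals r t t ! i - vals r t' t' ! i\<bar> \<le> 4 * \<bar>t - t'\<bar>"
proof -
  have "vals r t t ! i - vals r t' t' ! i = (gg r t (i div r) - gg r t' (i div r)) + (gg r t (i mod r) - gg r t' (i mod r))"
    using i by (simp add: vals_def mu_def)
  then have "\<bar>vals r t t ! i - vals r t' t' ! i\<bar> \<le> \<bar>gg r t (i div r) - gg r t' (i div r)\<bar> + \<bar>gg r t (i mod r) - gg r t' (i mod r)\<bar>"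
    by simp
  also have "\<dots> \<le> 2 * \<bar>t - t'\<bar> + 2 * \<bar>t - t'\<bar>" using gg_lip[OF r] by (intro add_mono) auto
  finally show ?thesis by simp
qed

lemma length_vals[simp]: "length (vals r t t') = r*r" unfolding vals_def by simp

lemma lam_diag: "r \<ge> 2 \<Longrightarrow> lam r j t t = sort (vals r t t) ! (j-1)"
  unfolding lam_def by (simp add: eigs_vals)

lemma lam_cont:
  assumes r: "r \<ge> 2" and j: "1 \<le> j" "j \<le> r*r"
  shows "continuous_on {0..pi} (\<lambda>t. lam r j t t)"
proof (rule lipschitz_on_continuous_on)
  show "4-lipschitz_on {0..pi} (\<lambda>t. lam r j t t)"
    unfolding lipschitz_on_def
  proof (intro conjI ballI)
    fix t t' :: real
    have r0: "r > 0" using r by simp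
    have d1: "\<forall>i<length (vals r t' t'). \<bar>vals r t t ! i - vals r t' t' ! i\<bar> \<le> 4 * \<bar>t - t'\<bar>"
      using vals_lip[OF r0] by simp
    have d2: "\<forall>i<length (vals r t t). \<bar>vals r t' t' ! i - vals r t t ! i\<bar> \<le> 4 * \<bar>t - t'\<bar>"
      using vals_lip[OF r0] by (simp add: abs_minus_commute)
    have "sort (vals r t t) ! (j-1) \<le> sort (vals r t' t') ! (j-1) + 4 * \<bar>t - t'\<bar>"
      using j by (intro sort_lip[OF _ d1]) auto
    moreover have "sort (vals r t' t') ! (j-1) \<le> sort (vals r t t) ! (j-1) + 4 * \<bar>t - t'\<bar>"
      using j by (intro sort_lip[OF _ d2]) auto
    ultimately show "dist (lam r j t t) (lam r j t' t') \<le> 4 * dist t t'"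
      using r by (simp add: lam_diag dist_real_def abs_le_iff)
  qed simp
qed

lemma cos_Cr:
  assumes r: "r > 0" and m: "m \<le> 2*r"
  shows "2 * cos (pi * real m / real r) \<in> Cr r"
proof (cases "m \<le> r")
  case True
  then show ?thesis unfolding Cr_def by blast
next
  case False
  have "2 * cos (pi * real m / real r) = 2 * cos (pi * real (2*r - m) / real r)"
  proof -
    have "pi * real (2*r - m) / real r = 2*pi - pi * real m / real r"
      using m r by (simp add: of_nat_diff field_simps)
    then show ?thesis by (simp add: cos_diff)
  qed
  moreover have "2*r - m \<le> r" using False by simp
  ultimately show ?thesis unfolding Cr_def by blast
qed

lemma gg0_Cr: "r > 0 \<Longrightarrow> a < r \<Longrightarrow> gg r 0 a \<in> Cr r"
proof -
  assume r: "r > 0" and a: "a < r"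
  have "gg r 0 a = 2 * cos (pi * real (2*a) / real r)" unfolding gg_def by (simp add: field_simps)
  then show ?thesis using cos_Cr[OF r, of "2*a"] a by simp
qed

lemma ggpi_Cr: "r > 0 \<Longrightarrow> a < r \<Longrightarrow> gg r pi a \<in> Cr r"
proof -
  assume r: "r > 0" and a: "a < r"
  have "gg r pi a = 2 * cos (pi * real (2*a+1) / real r)" unfolding gg_def by (simp add: field_simps)
  then show ?thesis using cos_Cr[OF r, of "2*a+1"] a by simp
qed

lemma notin_vals:
  assumes r: "r > 0" and E: "E \<notin> CGamma r" and t: "t = 0 \<or> t = pi"
  shows "E \<notin> set (vals r t t)"
proof
  assume "E \<in> set (vals r t t)"
  then obtain p where p: "p < r*r" "E = gg r t (p div r) + gg r t (p mod r)"
    unfolding vals_def mu_def by auto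
  have "gg r t (p div r) \<in> Cr r" "gg r t (p mod r) \<in> Cr r"
    using t divmod_lt[OF p(1)] gg0_Cr[OF r] ggpi_Cr[OF r] by auto
  then have "E \<in> CGamma r" using p(2) unfolding CGamma_def by blast
  then show False using E by simp
qed

lemma zero_CG: "r > 0 \<Longrightarrow> (0::real) \<in> CGamma r"
proof -
  assume r: "r > 0"
  have "2 * cos (pi * real 0 / real r) \<in> Cr r" "2 * cos (pi * real r / real r) \<in> Cr r"
    unfolding Cr_def by blast+
  then have "2 \<in> Cr r" "-2 \<in> Cr r" using r by auto
  then show ?thesis unfolding CGamma_def by force
qed



lemma ggpi_sym:
  assumes a: "a < r"
  shows "gg r pi (r - 1 - a) = gg r pi a"
proof -
  have "(pi + 2*pi*real (r - 1 - a)) / real r = 2*pi - (pi + 2*pi*real a) / real r"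
    using a by (simp add: of_nat_diff field_simps)
  then show ?thesis unfolding gg_def by (simp add: cos_diff)
qed

lemma count_pi_even:
  assumes r: "r > 0" "even r"
  shows "even (card {(a,b). a < r \<and> b < r \<and> gg r pi a + gg r pi b < E})"
proof -
  let ?S = "{(a,b). a < r \<and> b < r \<and> gg r pi a + gg r pi b < E}"
  let ?\<sigma> = "\<lambda>(a::nat,b::nat). (r - 1 - a, b)"
  have fin: "finite ?S" by (rule finite_subset[of _ "{..<r} \<times> {..<r}"]) auto
  have "\<forall>x\<in>?S. ?\<sigma> x \<in> ?S \<and> ?\<sigma> (?\<sigma> x) = x \<and> ?\<sigma> x \<noteq> x"
  proof
    fix x assume "x \<in> ?S"
    then obtain a b where x: "x = (a,b)" and ab: "a < r" "b < r" "gg r pi a + gg r pi b < E" by auto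
    have "?\<sigma> (a,b) \<in> ?S" using ab ggpi_sym[OF ab(1)] by auto
    moreover have "?\<sigma> (?\<sigma> (a,b)) = (a,b)" using ab by auto
    moreover have "?\<sigma> (a,b) \<noteq> (a,b)"
    proof
      assume "?\<sigma> (a,b) = (a,b)"
      then have "r - 1 - a = a" by simp
      then have "r = 2*a + 1" using ab by arith
      then show False using r by simp
    qed
    ultimately show "?\<sigma> x \<in> ?S \<and> ?\<sigma> (?\<sigma> x) = x \<and> ?\<sigma> x \<noteq> x" using x by simp
  qed
  then show ?thesis by (rule inv_even[OF fin])
qed

definition tau :: "nat \<Rightarrow> nat \<Rightarrow> nat" where
  "tau r a = (if a = 0 then 0 else r - a)"

lemma gg0_sym:
  assumes a: "a < r"
  shows "gg r 0 (tau r a) = gg r 0 a"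
proof (cases "a = 0")
  case True then show ?thesis by (simp add: tau_def)
next
  case False
  have "(2*pi*real (r - a)) / real r = 2*pi - (2*pi*real a) / real r"
    using a by (simp add: of_nat_diff field_simps)
  then show ?thesis using False unfolding gg_def tau_def by (simp add: cos_diff)
qed

lemma tau_lt: "a < r \<Longrightarrow> tau r a < r" by (simp add: tau_def)
lemma tau_tau: "a < r \<Longrightarrow> tau r (tau r a) = a" by (simp add: tau_def)
lemma tau_fix: "even r \<Longrightarrow> a < r \<Longrightarrow> (tau r a = a) \<longleftrightarrow> (a = 0 \<or> a = r div 2)"
  by (auto simp: tau_def elim!: evenE)

lemma gg0_0: "r > 0 \<Longrightarrow> gg r 0 0 = 2" by (simp add: gg_def)
lemma gg0_h: "r > 0 \<Longrightarrow> even r \<Longrightarrow> gg r 0 (r div 2) = -2"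
proof -
  assume r: "r > 0" "even r"
  then obtain k where k: "r = 2*k" by (auto elim!: evenE)
  then have k0: "k > 0" using r by simp
  have "(0 + 2*pi*real (r div 2)) / real r = pi" using k k0 by simp
  then show ?thesis unfolding gg_def by simp
qed

lemma count_0_odd:
  assumes r: "r > 0" "even r" and E: "-4 < E" "E < 4" "E \<noteq> 0"
  shows "odd (card {(a,b). a < r \<and> b < r \<and> gg r 0 a + gg r 0 b < E})"
proof -
  let ?S = "{(a,b). a < r \<and> b < r \<and> gg r 0 a + gg r 0 b < E}"
  let ?\<sigma> = "\<lambda>(a::nat,b::nat). (tau r a, tau r b)"
  let ?h = "r div 2"
  have h: "?h < r" "?h \<noteq> 0" using r by (auto elim!: evenE)
  have fin: "finite ?S" by (rule finite_subset[of _ "{..<r} \<times> {..<r}"]) auto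
  have par: "even (card ?S) = even (card {x\<in>?S. ?\<sigma> x = x})"
    by (rule inv_parity[OF fin]) (auto simp: tau_lt tau_tau gg0_sym)
  have F: "{x\<in>?S. ?\<sigma> x = x} = (if 0 < E then {(?h,?h),(0,?h),(?h,0)} else {(?h,?h)})"
  proof -
    have "{x\<in>?S. ?\<sigma> x = x} = {(a,b). (a = 0 \<or> a = ?h) \<and> (b = 0 \<or> b = ?h) \<and> gg r 0 a + gg r 0 b < E}"
      using tau_fix[OF r(2)] h r by auto
    also have "\<dots> = (if 0 < E then {(?h,?h),(0,?h),(?h,0)} else {(?h,?h)})"
      using gg0_0[OF r(1)] gg0_h[OF r] E h by auto
    finally show ?thesis .
  qed
  have "odd (card {x\<in>?S. ?\<sigma> x = x})"
    unfolding F using h by auto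
  then show ?thesis using par by simp
qed

lemma interior_ivt:
  assumes cont: "continuous_on {0..pi} (\<lambda>t. lam r j t t)"
    and E: "(lam r j 0 0 < E \<and> E < lam r j pi pi) \<or> (lam r j pi pi < E \<and> E < lam r j 0 0)"
  shows "E \<in> interior (band r j)"
proof -
  define f where "f = (\<lambda>t. lam r j t t)"
  define lo where "lo = min (f 0) (f pi)"
  define hi where "hi = max (f 0) (f pi)"
  have sub: "{lo<..<hi} \<subseteq> band r j"
  proof
    fix y assume y: "y \<in> {lo<..<hi}"
    have "\<exists>t. 0 \<le> t \<and> t \<le> pi \<and> f t = y"
    proof (cases "f 0 \<le> f pi")
      case True
      then show ?thesis using y cont unfolding lo_def hi_def f_def
        by (intro IVT'[of "\<lambda>t. lam r j t t" 0 y pi]) auto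
    next
      case False
      then show ?thesis using y cont unfolding lo_def hi_def f_def
        by (intro IVT2'[of "\<lambda>t. lam r j t t" pi y 0]) auto
    qed
    then obtain t where t: "0 \<le> t" "t \<le> pi" "lam r j t t = y" unfolding f_def by blast
    then show "y \<in> band r j" unfolding band_def by force
  qed
  have "E \<in> {lo<..<hi}" using E unfolding lo_def hi_def f_def by auto
  then show ?thesis using interior_maximal[OF sub] by auto
qed



lemma sort_nth_notin:
  assumes "E \<notin> set xs" "j - 1 < length xs"
  shows "sort xs ! (j-1) \<noteq> (E::real)"
proof
  assume "sort xs ! (j-1) = E"
  moreover have "sort xs ! (j-1) \<in> set (sort xs)" using assms(2) by (intro nth_mem) simp
  ultimately show False using assms(1) by simp
qed

theorem proposition3p2:
  fixes r :: nat and E :: real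
  assumes "r > 0" and "even r"
    and "E \<in> {-4<..<4}" and "E \<notin> CGamma r"
  shows "\<exists>j \<in> {1..r^2}. E \<in> interior (band r j)"
proof -
  have r0: "r > 0" and ev: "even r" using assms by auto
  have r2: "r \<ge> 2" using r0 ev by (auto elim!: evenE)
  have E4: "-4 < E" "E < 4" using assms(3) by auto
  have E0: "E \<noteq> 0" using zero_CG[OF r0] assms(4) by auto
  define c where "c = (\<lambda>t. length (filter (\<lambda>x. x < E) (vals r t t)))"
  have c0: "odd (c 0)" unfolding c_def count_vals[OF r0] using count_0_odd[OF r0 ev E4 E0] .
  have cpi: "even (c pi)" unfolding c_def count_vals[OF r0] using count_pi_even[OF r0 ev] .
  have cle: "c t \<le> r*r" for t unfolding c_def by (metis length_filter_le length_vals)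
  have key: "lam r j t t < E \<longleftrightarrow> j \<le> c t" if "1 \<le> j" "j \<le> r*r" for j t
    using sorted_count[of "sort (vals r t t)" j E] that
    unfolding lam_diag[OF r2] c_def count_sort by simp
  have ne: "lam r j t t \<noteq> E" if "1 \<le> j" "j \<le> r*r" "t = 0 \<or> t = pi" for j t
    unfolding lam_diag[OF r2] using sort_nth_notin[OF notin_vals[OF r0 assms(4) that(3)]] that by simp
  have "c 0 \<noteq> c pi" using c0 cpi by auto
  then consider "c 0 < c pi" | "c pi < c 0" by linarith
  then show ?thesis
  proof cases
    case 1
    define j where "j = c 0 + 1"
    have j: "1 \<le> j" "j \<le> r*r" using 1 cle[of pi] unfolding j_def by auto
    have "lam r j pi pi < E" using key[OF j] 1 unfolding j_def by simp
    moreover have "E < lam r j 0 0"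
    proof -
      have "\<not> lam r j 0 0 < E" using key[OF j] unfolding j_def by simp
      moreover have "lam r j 0 0 \<noteq> E" using ne[OF j] by simp
      ultimately show ?thesis by simp
    qed
    ultimately have "E \<in> interior (band r j)"
      by (intro interior_ivt lam_cont[OF r2 j]) auto
    then show ?thesis using j by (auto simp: power2_eq_square)
  next
    case 2
    define j where "j = c pi + 1"
    have j: "1 \<le> j" "j \<le> r*r" using 2 cle[of 0] unfolding j_def by auto
    have "lam r j 0 0 < E" using key[OF j] 2 unfolding j_def by simp
    moreover have "E < lam r j pi pi"
    proof -
      have "\<not> lam r j pi pi < E" using key[OF j] unfolding j_def by simp
      moreover have "lam r j pi pi \<noteq> E" using ne[OF j] by simp
      ultimately show ?thesis by simp
    qed
    ultimately have "E \<in> interior (band r j)"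
      by (intro interior_ivt lam_cont[OF r2 j]) auto
    then show ?thesis using j by (auto simp: power2_eq_square)
  qed
qed


end
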